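(* Let $X$ be a locally compact Polish space and $B\subseteq X$ dense. Let $\succeq'$ be a complete binary relation on $X$, and let $\succeq$ and $\succeq^*$ be complete, continuous, locally strict binary relations on $X$. If $\succeq'\cap(B\times B)\subseteq\succeq^*\cap\succeq\cap(B\times B)$, then $\succeq^*=\succeq$.
   Context: A binary relation $R\subseteq X\times X$ is complete if for all $x,y$, $xRy$ or $yRx$; continuous if closed in $X\times X$; locally strict if for all $x R y$ and every neighborhood $V$ of $(x,y)$ there is $(x',y')\in V$ with $x'Ry'$ and not $y'Rx'$. *)

theory Defs
  imports "HOL-Analysis.Analysis"
begin

abbreviation nhds_sets :: "'b::topological_space \<Rightarrow> 'b set set" where
  "nhds_sets p \<equiv> {V. \<exists>U. open U \<and> p \<in> U \<and> U \<subseteq> V}"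

definition complete_rel :: "('a \<times> 'a) set \<Rightarrow> bool" where
  "complete_rel R \<longleftrightarrow> (\<forall>x y. (x, y) \<in> R \<or> (y, x) \<in> R)"

definition continuous_rel :: "('a::topological_space \<times> 'a) set \<Rightarrow> bool" where
  "continuous_rel R \<longleftrightarrow> closed R"

definition locally_strict :: "('a::topological_space \<times> 'a) set \<Rightarrow> bool" where
  "locally_strict R \<longleftrightarrow>
     (\<forall>x y. (x, y) \<in> R \<longrightarrow>
        (\<forall>V. V \<in> nhds_sets (x, y) \<longrightarrow>
           (\<exists>x' y'. (x', y') \<in> V \<and> (x', y') \<in> R \<and> (y', x') \<notin> R)))"

end

theory Submission
  imports Defs
begin

lemma aux:
  fixes B :: "'a::topological_space set"
    and Rp R S :: "('a \<times> 'a) set"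
  assumes dense: "closure B = UNIV"
    and cRp: "complete_rel Rp"
    and closR: "closed R" and lsR: "locally_strict R"
    and closS: "closed S"
    and sub: "Rp \<inter> (B \<times> B) \<subseteq> S \<inter> R \<inter> (B \<times> B)"
  shows "R \<subseteq> S"
proof
  fix p assume pR: "p \<in> R"
  obtain x y where p: "p = (x, y)" by (cases p)
  show "p \<in> S"
  proof (rule ccontr)
    assume nS: "p \<notin> S"
    have oU: "open (- S)" using closS by auto
    have "- S \<in> nhds_sets (x, y)" using oU nS p by auto
    then obtain x' y' where xy': "(x', y') \<in> - S" "(y', x') \<notin> R"
      using lsR pR p unfolding locally_strict_def by blast
    have cl: "closed (prod.swap -` R)"
      by (rule closed_vimage[OF closR]) (rule continuous_on_swap)
    define W where "W = - S \<inter> - (prod.swap -` R)"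
    have oW: "open W" unfolding W_def using oU cl by auto
    have "(x', y') \<in> W" using xy' unfolding W_def by auto
    moreover have "closure (B \<times> B) = UNIV" using dense by (simp add: closure_Times)
    ultimately have "W \<inter> (B \<times> B) \<noteq> {}"
      using open_Int_closure_eq_empty[OF oW, of "B \<times> B"] by auto
    then obtain a b where ab: "(a, b) \<in> W" "a \<in> B" "b \<in> B" by auto
    have "(b, a) \<notin> R" using ab unfolding W_def by auto
    hence "(b, a) \<notin> Rp" using sub ab by blast
    hence "(a, b) \<in> Rp" using cRp unfolding complete_rel_def by blast
    hence "(a, b) \<in> S" using sub ab by blast
    thus False using ab unfolding W_def by auto
  qed
qed

theorem lemma11:
  fixes B :: "'a::polish_space set"
    and Rp R Rs :: "('a \<times> 'a) set"
  assumes lc: "locally_compact_space (euclidean :: 'a topology)"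
    and dense: "closure B = UNIV"
    and cRp: "complete_rel Rp"
    and cR: "complete_rel R" and contR: "continuous_rel R" and lsR: "locally_strict R"
    and cRs: "complete_rel Rs" and contRs: "continuous_rel Rs" and lsRs: "locally_strict Rs"
    and sub: "Rp \<inter> (B \<times> B) \<subseteq> Rs \<inter> R \<inter> (B \<times> B)"
  shows "Rs = R"
proof
  show "R \<subseteq> Rs"
    by (rule aux[OF dense cRp _ lsR _ sub]) (use contR contRs in \<open>auto simp: continuous_rel_def\<close>)
  have sub': "Rp \<inter> (B \<times> B) \<subseteq> R \<inter> Rs \<inter> (B \<times> B)" using sub by blast
  show "Rs \<subseteq> R"
    by (rule aux[OF dense cRp _ lsRs _ sub']) (use contR contRs in \<open>auto simp: continuous_rel_def\<close>)
qed

end
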